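(* Let $G$ be an abelian group and let $Z$ be a finite multiset of elements of $G$ with $\dim(Z)\geqslant1$. Then $$|\Sigma(Z)|\leqslant 2^{2\dim(Z)\left(\log_2\left(\frac{|Z|}{\dim(Z)}\right)+2\right)}=\left(\frac{4|Z|}{\dim(Z)}\right)^{2\dim(Z)}.$$
   Context: $|Z|$ is the size of $Z$ counted with multiplicity. The additive span of $Z$ is $\Sigma(Z)=\{\sum_{z\in Z'}z: Z'\subseteq Z\}$, where $Z'$ ranges over sub-multisets of $Z$. A (multi)set $S$ is dissociated if any two sub-multisets of $S$ with equal sums are equal. $\dim(Z)$ is the size of the largest dissociated sub-multiset of $Z$. *)

theory Defs
  imports "HOL-Analysis.Analysis" "HOL-Library.Multiset"
begin

definition additive_span :: "'a::ab_group_add multiset \<Rightarrow> 'a set" where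
  "additive_span Z = {sum_mset W | W. W \<subseteq># Z}"

definition dissociated :: "'a::ab_group_add multiset \<Rightarrow> bool" where
  "dissociated S \<longleftrightarrow> (\<forall>A B. A \<subseteq># S \<longrightarrow> B \<subseteq># S \<longrightarrow> sum_mset A = sum_mset B \<longrightarrow> A = B)"

definition mdim :: "'a::ab_group_add multiset \<Rightarrow> nat" where
  "mdim Z = Max {size S | S. S \<subseteq># Z \<and> dissociated S}"

end

theory Submission
  imports Defs
begin


lemma subset_image_mset_set:
  "finite I \<Longrightarrow> W \<subseteq># image_mset f (mset_set I) \<Longrightarrow> \<exists>J\<subseteq>I. W = image_mset f (mset_set J)"
proof (induction I arbitrary: W rule: finite_induct)
  case empty
  then show ?case by auto
next
  case (insert a I)
  have eq: "image_mset f (mset_set (insert a I)) = add_mset (f a) (image_mset f (mset_set I))"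
    using insert by simp
  show ?case
  proof (cases "f a \<in># W")
    case True
    then obtain W' where W': "W = add_mset (f a) W'" by (metis multi_member_split)
    with insert.prems eq have "W' \<subseteq># image_mset f (mset_set I)" by simp
    with insert.IH obtain J where "J \<subseteq> I" "W' = image_mset f (mset_set J)" by blast
    moreover have "a \<notin> J" using \<open>J \<subseteq> I\<close> insert by auto
    moreover have "finite J" using \<open>J \<subseteq> I\<close> insert finite_subset by auto
    ultimately show ?thesis using W' by (intro exI[of _ "insert a J"]) auto
  next
    case False
    have "W \<subseteq># image_mset f (mset_set I)"
      unfolding subseteq_mset_def
    proof
      fix b
      have "count W b \<le> count (add_mset (f a) (image_mset f (mset_set I))) b"
        using insert.prems eq by (simp add: subseteq_mset_def)
      then show "count W b \<le> count (image_mset f (mset_set I)) b"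
        using False by (cases "b = f a") (auto simp: not_in_iff)
    qed
    with insert.IH show ?thesis by blast
  qed
qed

definition shat :: "nat set set \<Rightarrow> nat \<Rightarrow> nat set set" where
  "shat F n = {T. T \<subseteq> {0..<n} \<and> (\<forall>U\<subseteq>T. \<exists>W\<in>F. W \<inter> T = U)}"

lemma shat_finite: "finite (shat F n)"
  by (rule finite_subset[of _ "Pow {0..<n}"]) (auto simp: shat_def)

lemma pajor: "F \<subseteq> Pow {0..<n} \<Longrightarrow> card F \<le> card (shat F n)"
proof (induction n arbitrary: F)
  case 0
  then have "F \<subseteq> {{}}" by auto
  then show ?case
  proof (cases "F = {}")
    case True then show ?thesis by simp
  next
    case False
    with \<open>F \<subseteq> {{}}\<close> have "F = {{}}" by blast
    then have "shat F 0 = {{}}" by (auto simp: shat_def)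
    then show ?thesis using \<open>F = {{}}\<close> by simp
  qed
next
  case (Suc n)
  have finF: "finite F" using Suc.prems finite_subset by blast
  define F0 where "F0 = {W\<in>F. n \<notin> W}"
  define F1' where "F1' = {W\<in>F. n \<in> W}"
  define F1 where "F1 = (\<lambda>W. W - {n}) ` F1'"
  have F0sub: "F0 \<subseteq> Pow {0..<n}"
  proof
    fix W assume "W \<in> F0"
    then have "W \<subseteq> {0..<Suc n}" "n \<notin> W" using Suc.prems by (auto simp: F0_def)
    then show "W \<in> Pow {0..<n}" using less_Suc_eq by fastforce
  qed
  have F1sub: "F1 \<subseteq> Pow {0..<n}"
  proof
    fix W assume "W \<in> F1"
    then obtain W' where "W' \<in> F" "W = W' - {n}" by (auto simp: F1_def F1'_def)
    then have "W' \<subseteq> {0..<Suc n}" using Suc.prems by auto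
    then show "W \<in> Pow {0..<n}" using \<open>W = W' - {n}\<close> less_Suc_eq by fastforce
  qed
  have "card F = card F0 + card F1'"
    using finF by (subst card_Un_disjoint[symmetric]) (auto simp: F0_def F1'_def intro: arg_cong[where f=card])
  moreover have "card F1 = card F1'"
    unfolding F1_def by (rule card_image) (auto simp: inj_on_def F1'_def)
  ultimately have cF: "card F = card F0 + card F1" by simp
  define S0 where "S0 = shat F0 n"
  define S1 where "S1 = shat F1 n"
  have "card F0 \<le> card S0" using Suc.IH F0sub S0_def by blast
  moreover have "card F1 \<le> card S1" using Suc.IH F1sub S1_def by blast
  moreover have "card S0 + card S1 = card (S0 \<union> S1) + card (S0 \<inter> S1)"
    using card_Un_Int[of S0 S1] by (simp add: S0_def S1_def shat_finite)
  moreover have "card (S0 \<union> S1) + card (S0 \<inter> S1) \<le> card (shat F (Suc n))"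
  proof -
    have A: "S0 \<union> S1 \<subseteq> shat F (Suc n)"
    proof
      fix T assume "T \<in> S0 \<union> S1"
      then show "T \<in> shat F (Suc n)"
      proof
        assume "T \<in> S0"
        then have Tn: "T \<subseteq> {0..<n}" and sh: "\<forall>U\<subseteq>T. \<exists>W\<in>F0. W \<inter> T = U"
          by (auto simp: S0_def shat_def)
        have "\<forall>U\<subseteq>T. \<exists>W\<in>F. W \<inter> T = U" using sh by (auto simp: F0_def)
        moreover have "T \<subseteq> {0..<Suc n}" using Tn by auto
        ultimately show ?thesis by (simp add: shat_def)
      next
        assume T: "T \<in> S1"
        then have Tn: "T \<subseteq> {0..<n}" by (simp add: S1_def shat_def)
        show ?thesis unfolding shat_def
        proof (safe)
          fix x assume "x \<in> T" then show "x \<in> {0..<Suc n}" using Tn by auto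
        next
          fix U assume "U \<subseteq> T"
          have "\<forall>U\<subseteq>T. \<exists>W\<in>F1. W \<inter> T = U" using T by (simp add: S1_def shat_def)
          then obtain W where "W \<in> F1" "W \<inter> T = U" using \<open>U \<subseteq> T\<close> by blast
          then obtain W' where "W' \<in> F" "W = W' - {n}" by (auto simp: F1_def F1'_def)
          moreover have "n \<notin> T" using Tn by auto
          ultimately show "\<exists>W\<in>F. W \<inter> T = U" using \<open>W \<inter> T = U\<close> by blast
        qed
      qed
    qed
    have B: "insert n ` (S0 \<inter> S1) \<subseteq> shat F (Suc n)"
    proof
      fix T' assume "T' \<in> insert n ` (S0 \<inter> S1)"
      then obtain T where T': "T' = insert n T" and T0: "T \<in> S0" and T1: "T \<in> S1" by auto
      then have Tn: "T \<subseteq> {0..<n}" by (simp add: S1_def shat_def)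
      then have nT: "n \<notin> T" by auto
      show "T' \<in> shat F (Suc n)" unfolding shat_def
      proof (safe)
        fix x assume "x \<in> T'" then show "x \<in> {0..<Suc n}" using Tn T' by auto
      next
        fix U assume U: "U \<subseteq> T'"
        show "\<exists>W\<in>F. W \<inter> T' = U"
        proof (cases "n \<in> U")
          case True
          have "U - {n} \<subseteq> T" using U T' by auto
          have "\<forall>U\<subseteq>T. \<exists>W\<in>F1. W \<inter> T = U" using T1 by (simp add: S1_def shat_def)
          then obtain W where "W \<in> F1" "W \<inter> T = U - {n}" using \<open>U - {n} \<subseteq> T\<close> by blast
          then obtain W' where "W' \<in> F" "n \<in> W'" "W = W' - {n}" by (auto simp: F1_def F1'_def)
          then have "W' \<inter> T' = U" using \<open>W \<inter> T = U - {n}\<close> T' True nT by auto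
          then show ?thesis using \<open>W' \<in> F\<close> by blast
        next
          case False
          have "U \<subseteq> T" using U T' False by auto
          have "\<forall>U\<subseteq>T. \<exists>W\<in>F0. W \<inter> T = U" using T0 by (simp add: S0_def shat_def)
          then obtain W where "W \<in> F0" "W \<inter> T = U" using \<open>U \<subseteq> T\<close> by blast
          then have "W \<in> F" "W \<inter> T' = U" using T' by (auto simp: F0_def)
          then show ?thesis by blast
        qed
      qed
    qed
    have C: "(S0 \<union> S1) \<inter> insert n ` (S0 \<inter> S1) = {}"
    proof -
      have "T \<subseteq> {0..<n}" if "T \<in> S0 \<union> S1" for T using that by (auto simp: S0_def S1_def shat_def)
      then show ?thesis by fastforce
    qed
    have D: "card (insert n ` (S0 \<inter> S1)) = card (S0 \<inter> S1)"
    proof (rule card_image, rule inj_onI)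
      fix X Y assume "X \<in> S0 \<inter> S1" "Y \<in> S0 \<inter> S1" "insert n X = insert n Y"
      moreover have "X \<subseteq> {0..<n}" "Y \<subseteq> {0..<n}" using calculation by (auto simp: S0_def shat_def)
      ultimately show "X = Y" by (metis atLeastLessThan_iff insert_ident less_irrefl subsetD)
    qed
    have "card (S0 \<union> S1) + card (S0 \<inter> S1) = card ((S0 \<union> S1) \<union> insert n ` (S0 \<inter> S1))"
      using C D by (subst card_Un_disjoint) (auto simp: S0_def S1_def shat_finite)
    also have "\<dots> \<le> card (shat F (Suc n))"
      using A B by (intro card_mono shat_finite) auto
    finally show ?thesis .
  qed
  ultimately show ?case using cF by linarith
qed



definition code :: "nat set \<Rightarrow> nat" where "code W = (\<Sum>i\<in>W. 2^i)"

lemma sum_pow2_lt: "(\<Sum>i<m. (2::nat)^i) < 2^m"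
  by (induction m) auto

lemma code_less:
  assumes "finite U1" "finite U2" "U1 \<inter> U2 = {}" "U1 \<union> U2 \<noteq> {}" "Max (U1 \<union> U2) \<in> U2"
  shows "code U1 < code U2"
proof -
  define m where "m = Max (U1 \<union> U2)"
  have "U1 \<subseteq> {..<m}"
  proof
    fix x assume x: "x \<in> U1"
    then have "x \<le> m" using assms by (simp add: m_def)
    moreover have "x \<noteq> m" using x assms m_def by auto
    ultimately show "x \<in> {..<m}" by simp
  qed
  then have "code U1 \<le> (\<Sum>i<m. 2^i)" unfolding code_def by (intro sum_mono2) auto
  also have "\<dots> < 2^m" by (rule sum_pow2_lt)
  also have "2^m \<le> code U2" unfolding code_def
    using assms m_def by (intro member_le_sum) auto
  finally show ?thesis .
qed

lemma code_split: "finite W \<Longrightarrow> U \<subseteq> W \<Longrightarrow> code W = code (W - U) + code U"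
  unfolding code_def by (metis add.commute finite_subset sum.subset_diff)

definition minreps :: "(nat \<Rightarrow> 'a::ab_group_add) \<Rightarrow> nat \<Rightarrow> nat set set" where
  "minreps f n = {W. W \<subseteq> {0..<n} \<and> (\<forall>W'. W' \<subseteq> {0..<n} \<longrightarrow> sum f W' = sum f W \<longrightarrow> code W \<le> code W')}"

lemma minreps_image: "sum f ` Pow {0..<n} = sum f ` minreps f n"
proof
  show "sum f ` Pow {0..<n} \<subseteq> sum f ` minreps f n"
  proof
    fix x assume "x \<in> sum f ` Pow {0..<n}"
    then obtain W where W: "W \<subseteq> {0..<n}" "sum f W = x" by auto
    then obtain V where V: "V \<subseteq> {0..<n} \<and> sum f V = x"
      "\<forall>V'. V' \<subseteq> {0..<n} \<and> sum f V' = x \<longrightarrow> code V \<le> code V'"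
      using ex_has_least_nat[of "\<lambda>V. V \<subseteq> {0..<n} \<and> sum f V = x" W code] by blast
    then have "V \<in> minreps f n" by (auto simp: minreps_def)
    then show "x \<in> sum f ` minreps f n" using V by blast
  qed
qed (auto simp: minreps_def)

lemma swap_contra:
  assumes W: "W \<in> minreps f n" and WT: "W \<inter> T = U2" and T: "T \<subseteq> {0..<n}"
    and U1: "U1 \<subseteq> T" and disj: "U1 \<inter> U2 = {}" and s: "sum f U1 = sum f U2"
    and c: "code U1 < code U2"
  shows False
proof -
  have Wn: "W \<subseteq> {0..<n}" using W by (simp add: minreps_def)
  have finW: "finite W" using Wn finite_subset by blast
  have finT: "finite T" using T finite_subset by blast
  have U2W: "U2 \<subseteq> W" using WT by auto
  have finU1: "finite U1" using U1 finT finite_subset by blast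
  define W' where "W' = (W - U2) \<union> U1"
  have d: "(W - U2) \<inter> U1 = {}" using WT U1 disj by auto
  have W'n: "W' \<subseteq> {0..<n}" using Wn U1 T W'_def by auto
  have "sum f W' = sum f (W - U2) + sum f U1"
    unfolding W'_def using d finW finU1 by (simp add: sum.union_disjoint)
  also have "\<dots> = sum f (W - U2) + sum f U2" using s by simp
  also have "\<dots> = sum f W" using U2W finW by (metis add.commute finite_subset sum.subset_diff)
  finally have sW': "sum f W' = sum f W" .
  have "code W' = code (W - U2) + code U1"
    unfolding W'_def code_def using d finW finU1 by (simp add: sum.union_disjoint)
  also have "\<dots> < code (W - U2) + code U2" using c by simp
  also have "\<dots> = code W" using code_split[OF finW U2W] by simp
  finally have "code W' < code W" .
  moreover have "code W \<le> code W'" using W W'n sW' by (auto simp: minreps_def)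
  ultimately show False by simp
qed

lemma shat_inj:
  assumes T: "T \<in> shat (minreps f n) n"
  shows "inj_on (sum f) (Pow T)"
proof (rule inj_onI, rule ccontr)
  fix A B assume A: "A \<in> Pow T" and B: "B \<in> Pow T" and s: "sum f A = sum f B" and ne: "A \<noteq> B"
  have Tn: "T \<subseteq> {0..<n}" and sh: "\<forall>U\<subseteq>T. \<exists>W\<in>minreps f n. W \<inter> T = U"
    using T by (auto simp: shat_def)
  have finT: "finite T" using Tn finite_subset by blast
  have finA: "finite A" and finB: "finite B" using A B finT finite_subset by auto
  define U1 where "U1 = A - B"
  define U2 where "U2 = B - A"
  have sA: "sum f A = sum f (A \<inter> B) + sum f U1"
    unfolding U1_def by (rule sum.Int_Diff[OF finA])
  have sB: "sum f B = sum f (A \<inter> B) + sum f U2"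
    unfolding U2_def using sum.Int_Diff[OF finB, of f A] by (simp add: inf_commute)
  have s12: "sum f U1 = sum f U2" using s sA sB by simp
  have disj: "U1 \<inter> U2 = {}" by (auto simp: U1_def U2_def)
  have nonempty: "U1 \<union> U2 \<noteq> {}" using ne by (auto simp: U1_def U2_def)
  have fin1: "finite U1" and fin2: "finite U2" using finA finB by (auto simp: U1_def U2_def)
  have sub1: "U1 \<subseteq> T" and sub2: "U2 \<subseteq> T" using A B by (auto simp: U1_def U2_def)
  have "Max (U1 \<union> U2) \<in> U1 \<union> U2" using fin1 fin2 nonempty by (intro Max_in) auto
  then show False
  proof
    assume m: "Max (U1 \<union> U2) \<in> U1"
    have "code U2 < code U1" using code_less[of U2 U1] fin1 fin2 disj nonempty m
      by (simp add: Un_commute inf_commute)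
    moreover obtain W where "W \<in> minreps f n" "W \<inter> T = U1" using sh sub1 by blast
    ultimately show False using swap_contra[of W f n T U1 U2] Tn sub2 disj s12 by (auto simp: inf_commute)
  next
    assume m: "Max (U1 \<union> U2) \<in> U2"
    have "code U1 < code U2" using code_less[of U1 U2] fin1 fin2 disj nonempty m by simp
    moreover obtain W where "W \<in> minreps f n" "W \<inter> T = U2" using sh sub2 by blast
    ultimately show False using swap_contra[of W f n T U2 U1] Tn sub1 disj s12 by auto
  qed
qed

lemma inj_dissoc:
  assumes "finite T" "inj_on (sum f) (Pow T)"
  shows "dissociated (image_mset f (mset_set T))"
  unfolding dissociated_def
proof (intro allI impI)
  fix A B assume A: "A \<subseteq># image_mset f (mset_set T)" and B: "B \<subseteq># image_mset f (mset_set T)"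
    and s: "sum_mset A = sum_mset B"
  obtain JA where JA: "JA \<subseteq> T" "A = image_mset f (mset_set JA)" using subset_image_mset_set[OF assms(1) A] by blast
  obtain JB where JB: "JB \<subseteq> T" "B = image_mset f (mset_set JB)" using subset_image_mset_set[OF assms(1) B] by blast
  have "sum f JA = sum f JB" using s JA JB by (simp add: sum_unfold_sum_mset)
  then have "JA = JB" using assms(2) JA JB by (auto dest: inj_onD)
  then show "A = B" using JA JB by simp
qed



lemma card_small_subsets:
  assumes "finite A"
  shows "card {T. T \<subseteq> A \<and> card T \<le> d} \<le> (\<Sum>k\<le>d. card A choose k)"
proof -
  have "{T. T \<subseteq> A \<and> card T \<le> d} = (\<Union>k\<in>{..d}. {T. T \<subseteq> A \<and> card T = k})" by auto
  then have "card {T. T \<subseteq> A \<and> card T \<le> d} \<le> (\<Sum>k\<le>d. card {T. T \<subseteq> A \<and> card T = k})"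
    using card_UN_le[of "{..d}" "\<lambda>k. {T. T \<subseteq> A \<and> card T = k}"] by simp
  also have "\<dots> = (\<Sum>k\<le>d. card A choose k)" using n_subsets[OF assms] by simp
  finally show ?thesis .
qed

lemma fact_le_fact_pow: "k \<le> d \<Longrightarrow> fact d \<le> fact k * d ^ (d - k)"
proof (induction d)
  case 0
  then show ?case by simp
next
  case (Suc d)
  show ?case
  proof (cases "k = Suc d")
    case True then show ?thesis by simp
  next
    case False
    then have kd: "k \<le> d" using Suc.prems by simp
    have "fact (Suc d) = Suc d * fact d" by simp
    also have "\<dots> \<le> Suc d * (fact k * d ^ (d - k))" using Suc.IH[OF kd] by (rule mult_le_mono2)
    also have "\<dots> \<le> Suc d * (fact k * Suc d ^ (d - k))" by (intro mult_le_mono2 mult_le_mono2 power_mono) auto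
    also have "\<dots> = fact k * Suc d ^ (Suc d - k)" using kd by (simp add: Suc_diff_le algebra_simps)
    finally show ?thesis .
  qed
qed

lemma binom_fact_le: "k \<le> d \<Longrightarrow> d \<le> n \<Longrightarrow> (n choose k) * fact d \<le> n ^ d"
proof -
  assume kd: "k \<le> d" and dn: "d \<le> n"
  have "(n choose k) * fact d \<le> (n choose k) * (fact k * d ^ (d - k))"
    using fact_le_fact_pow[OF kd] by simp
  also have "\<dots> = ((n choose k) * fact k) * d ^ (d - k)" by simp
  also have "\<dots> \<le> n ^ k * n ^ (d - k)"
    by (intro mult_le_mono binomial_fact_pow power_mono dn) simp
  also have "\<dots> = n ^ d" using kd by (simp add: power_add[symmetric])
  finally show ?thesis .
qed

lemma sum_binom_fact: "d \<le> n \<Longrightarrow> (\<Sum>k\<le>d. n choose k) * fact d \<le> (d + 1) * n ^ d"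
proof -
  assume dn: "d \<le> n"
  have "(\<Sum>k\<le>d. n choose k) * fact d = (\<Sum>k\<le>d. (n choose k) * fact d)" by (simp add: sum_distrib_right)
  also have "\<dots> \<le> (\<Sum>k\<le>d. n ^ d)" by (intro sum_mono binom_fact_le dn) auto
  also have "\<dots> = (d + 1) * n ^ d" by simp
  finally show ?thesis .
qed

lemma pow_le_fact: "real d ^ d \<le> 3 ^ d * fact d"
proof -
  have "real d ^ d / fact d \<le> (\<Sum>m\<le>d. real d ^ m / fact m)"
    by (rule member_le_sum[where f="\<lambda>m. real d ^ m / fact m"]) auto
  also have "\<dots> \<le> exp (real d)"
    using summable_exp_generic[of "real d"]
    by (auto simp: exp_def divide_inverse ac_simps intro!: sum_le_suminf)
  also have "\<dots> = exp 1 ^ d" using exp_of_nat_mult[of d 1] by simp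
  also have "\<dots> \<le> 3 ^ d" by (intro power_mono exp_le) auto
  finally show ?thesis by (simp add: divide_le_eq mult.commute)
qed

lemma numeric_bound:
  assumes "1 \<le> d" "d \<le> n"
  shows "real (\<Sum>k\<le>d. n choose k) \<le> (4 * real n / real d) ^ (2 * d)"
proof -
  define N where "N = real (\<Sum>k\<le>d. n choose k)"
  define y where "y = real n / real d"
  have dpos: "real d > 0" using assms by simp
  have y1: "y \<ge> 1" using assms by (simp add: y_def)
  have "N * fact d \<le> real (d + 1) * real n ^ d"
    using sum_binom_fact[OF assms(2)] unfolding N_def
    by (metis of_nat_fact of_nat_le_iff of_nat_mult of_nat_power)
  moreover have "real (d + 1) \<le> 2 ^ d"
    using less_exp[of d] by (metis Suc_eq_plus1 Suc_leI of_nat_le_iff of_nat_numeral of_nat_power)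
  ultimately have "N * fact d \<le> 2 ^ d * real n ^ d"
    by (smt (verit) mult_right_mono zero_le_power of_nat_0_le_iff)
  then have "N * fact d * real d ^ d \<le> 2 ^ d * real n ^ d * real d ^ d"
    by (intro mult_right_mono) auto
  also have "\<dots> \<le> 2 ^ d * real n ^ d * (3 ^ d * fact d)"
    using pow_le_fact[of d] by (intro mult_left_mono) auto
  finally have F1: "N * fact d * real d ^ d \<le> 2 ^ d * real n ^ d * (3 ^ d * fact d)" .
  have e6: "(6::real)^d = 2^d*3^d" by (simp flip: power_mult_distrib)
  moreover have "(N * real d ^ d) * fact d = N * fact d * real d ^ d" by (simp add: ac_simps)
  moreover have "(6 ^ d * real n ^ d) * fact d = 2 ^ d * real n ^ d * (3 ^ d * fact d)"
    using e6 by (simp add: ac_simps)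
  ultimately have "(N * real d ^ d) * fact d \<le> (6 ^ d * real n ^ d) * fact d" using F1 by metis
  then have A: "N * real d ^ d \<le> 6 ^ d * real n ^ d"
    by (rule mult_right_le_imp_le) simp
  have "6^d*y^d = (6^d * real n^d) / real d^d" by (simp add: y_def power_divide)
  moreover have "N \<le> (6^d * real n^d) / real d^d"
    using A dpos by (simp add: pos_le_divide_eq)
  ultimately have "N \<le> 6 ^ d * y ^ d" by simp
  also have "\<dots> \<le> 16 ^ d * (y ^ d * y ^ d)"
  proof -
    have "1 \<le> y ^ d" using y1 by (simp add: one_le_power)
    then have "y ^ d \<le> y ^ d * y ^ d" by simp
    moreover have "(6::real) ^ d \<le> 16 ^ d" by (intro power_mono) auto
    moreover have "0 \<le> y ^ d" using y1 by simp
    ultimately show ?thesis by (intro mult_mono) auto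
  qed
  also have "\<dots> = (4 * y) ^ (2 * d)"
  proof -
    have "(4*y)^(2*d) = ((4*y)^2)^d" by (simp add: power_mult)
    also have "(4*y)^2 = 16 * (y*y)" by (simp add: power2_eq_square)
    also have "(16 * (y*y))^d = 16^d * (y^d*y^d)" by (simp add: power_mult_distrib)
    finally show ?thesis by simp
  qed
  finally show ?thesis by (simp add: N_def y_def)
qed

lemma powr_identity:
  assumes "1 \<le> d" "d \<le> n"
  shows "2 powr (2 * real d * (log 2 (real n / real d) + 2)) = (4 * real n / real d) ^ (2 * d)"
proof -
  define y where "y = real n / real d"
  have y: "y > 0" using assms by (simp add: y_def)
  have "2 powr (log 2 y + 2) = 4 * y"
    using y by (simp add: powr_add)
  then have "2 powr (2 * real d * (log 2 y + 2)) = (4 * y) powr (real (2 * d))"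
    by (metis mult.commute powr_powr of_nat_mult of_nat_numeral)
  also have "\<dots> = (4 * y) ^ (2 * d)" using y powr_realpow[of "4*y" "2*d"] by simp
  finally show ?thesis by (simp add: y_def)
qed



theorem corollary3p6:
  fixes Z :: "'a::ab_group_add multiset"
  assumes "mdim Z \<ge> 1"
  shows "real (card (additive_span Z))
           \<le> 2 powr (2 * real (mdim Z) * (log 2 (real (size Z) / real (mdim Z)) + 2))
       \<and> 2 powr (2 * real (mdim Z) * (log 2 (real (size Z) / real (mdim Z)) + 2))
           = (4 * real (size Z) / real (mdim Z)) ^ (2 * mdim Z)"
proof -
  obtain xs where Zxs: "mset xs = Z" using ex_mset by blast
  define n where "n = length xs"
  define f where "f = (\<lambda>i. xs ! i)"
  have Zf: "Z = image_mset f (mset_set {0..<n})"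
  proof -
    have "xs = map f [0..<n]" by (simp add: f_def n_def map_nth)
    then have "mset xs = image_mset f (mset [0..<n])" by (metis mset_map)
    then show ?thesis using Zxs by simp
  qed
  have sizeZ: "size Z = n" unfolding Zxs[symmetric] n_def by simp
  define D where "D = {size S | S. S \<subseteq># Z \<and> dissociated S}"
  have finD: "finite D"
    by (rule finite_subset[of _ "{..size Z}"]) (auto simp: D_def size_mset_mono)
  have "dissociated {#}" by (simp add: dissociated_def)
  then have "0 \<in> D" unfolding D_def by force
  then have dD: "mdim Z \<in> D" unfolding mdim_def D_def[symmetric] using finD by (intro Max_in) auto
  have dn: "mdim Z \<le> n" using dD by (auto simp: D_def sizeZ[symmetric] size_mset_mono)
  have card_le: "card T \<le> mdim Z" if T: "T \<subseteq> {0..<n}" "inj_on (sum f) (Pow T)" for T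
  proof -
    have finT: "finite T" using T finite_subset by blast
    have "image_mset f (mset_set T) \<subseteq># Z"
      unfolding Zf by (intro image_mset_subseteq_mono subset_imp_msubset_mset_set T) simp
    moreover have "dissociated (image_mset f (mset_set T))" by (rule inj_dissoc[OF finT T(2)])
    ultimately have "card T \<in> D" unfolding D_def using finT by force
    then show ?thesis unfolding mdim_def D_def[symmetric] using finD by (simp add: Max_ge)
  qed
  have span: "additive_span Z \<subseteq> sum f ` Pow {0..<n}"
  proof
    fix x assume "x \<in> additive_span Z"
    then obtain W where W: "W \<subseteq># Z" "x = sum_mset W" by (auto simp: additive_span_def)
    then obtain J where J: "J \<subseteq> {0..<n}" "W = image_mset f (mset_set J)"
      using subset_image_mset_set[of "{0..<n}" W f] Zf by auto
    then have "x = sum f J" using W by (simp add: sum_unfold_sum_mset)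
    then show "x \<in> sum f ` Pow {0..<n}" using J by auto
  qed
  have finM: "finite (minreps f n)"
    by (rule finite_subset[of _ "Pow {0..<n}"]) (auto simp: minreps_def)
  have "card (additive_span Z) \<le> card (sum f ` Pow {0..<n})"
    using span by (intro card_mono) auto
  also have "\<dots> = card (sum f ` minreps f n)" by (simp add: minreps_image)
  also have "\<dots> \<le> card (minreps f n)" using finM by (rule card_image_le)
  also have "\<dots> \<le> card (shat (minreps f n) n)" by (rule pajor) (auto simp: minreps_def)
  also have "\<dots> \<le> card {T. T \<subseteq> {0..<n} \<and> card T \<le> mdim Z}"
  proof (intro card_mono)
    show "finite {T. T \<subseteq> {0..<n} \<and> card T \<le> mdim Z}" by simp
    show "shat (minreps f n) n \<subseteq> {T. T \<subseteq> {0..<n} \<and> card T \<le> mdim Z}"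
    proof
      fix T assume T: "T \<in> shat (minreps f n) n"
      then have "T \<subseteq> {0..<n}" by (simp add: shat_def)
      moreover have "inj_on (sum f) (Pow T)" using shat_inj[OF T] .
      ultimately show "T \<in> {T. T \<subseteq> {0..<n} \<and> card T \<le> mdim Z}" using card_le by blast
    qed
  qed
  also have "\<dots> \<le> (\<Sum>k\<le>mdim Z. n choose k)"
    using card_small_subsets[of "{0..<n}" "mdim Z"] by simp
  finally have "real (card (additive_span Z)) \<le> real (\<Sum>k\<le>mdim Z. n choose k)" by linarith
  also have "\<dots> \<le> (4 * real n / real (mdim Z)) ^ (2 * mdim Z)"
    using numeric_bound[OF assms dn] .
  finally show ?thesis using powr_identity[OF assms dn] sizeZ by simp
qed

end
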